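(* For every integer $n\geq 1$, $$c_n(231,213 : 231)=c_n(312,132 : 312)=\begin{cases}k^2+1 & \text{if } n=2k,\\ k^2+k+1 & \text{if } n=2k+1.\end{cases}$$
   Context: $S_n$ is the symmetric group on $[n]=\{1,\dots,n\}$, and a permutation $\pi\in S_n$ is written in one-line notation $\pi=\pi_1\pi_2\cdots\pi_n$ with $\pi_i=\pi(i)$. For $\tau\in S_k$, $k\le n$, $\pi$ contains $\tau$ if there are indices $i_1<\dots<i_k$ with $\pi_{i_s}>\pi_{i_t}$ iff $\tau_s>\tau_t$ for all $1\le s<t\le k$; otherwise $\pi$ avoids $\tau$. $\pi^2$ denotes the composition $\pi\circ\pi$. For patterns $\sigma_1,\sigma_2,\rho$, $c_n(\sigma_1,\sigma_2 : \rho)$ denotes the number of permutations $\pi\in S_n$ such that $\pi$ avoids both $\sigma_1$ and $\sigma_2$ and $\pi^2$ avoids $\rho$. *)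

theory Defs
  imports "HOL-Combinatorics.Permutations"
begin

text \<open>A permutation of [n] = {1..n} is a function nat => nat that permutes {1..n}
  (identity outside).
  A pattern tau in S_k is given by its one-line notation as a list
  [tau_1, ..., tau_k].\<close>

definition contains :: "(nat \<Rightarrow> nat) \<Rightarrow> nat \<Rightarrow> nat list \<Rightarrow> bool" where
  "contains \<pi> n \<tau> \<longleftrightarrow>
     (\<exists>idx :: nat \<Rightarrow> nat.
        (\<forall>s t. s < t \<and> t < length \<tau> \<longrightarrow> idx s < idx t) \<and>
        (\<forall>s < length \<tau>. 1 \<le> idx s \<and> idx s \<le> n) \<and>
        (\<forall>s t. s < t \<and> t < length \<tau> \<longrightarrow>
              (\<pi> (idx s) > \<pi> (idx t) \<longleftrightarrow> \<tau> ! s > \<tau> ! t)))"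

definition avoids :: "(nat \<Rightarrow> nat) \<Rightarrow> nat \<Rightarrow> nat list \<Rightarrow> bool" where
  "avoids \<pi> n \<tau> \<longleftrightarrow> \<not> contains \<pi> n \<tau>"

definition c :: "nat \<Rightarrow> nat list \<Rightarrow> nat list \<Rightarrow> nat list \<Rightarrow> nat" where
  "c n \<sigma>1 \<sigma>2 \<rho> = card {\<pi>. \<pi> permutes {1..n} \<and> avoids \<pi> n \<sigma>1 \<and> avoids \<pi> n \<sigma>2
                               \<and> avoids (\<pi> \<circ> \<pi>) n \<rho>}"

end

theory Submission
  imports Defs
begin

definition has231 :: "(nat \<Rightarrow> nat) \<Rightarrow> nat \<Rightarrow> bool" where
  "has231 f n \<longleftrightarrow> (\<exists>p q s. 1 \<le> p \<and> p < q \<and> q < s \<and> s \<le> n \<and> f s < f p \<and> f p < f q)"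
definition has213 :: "(nat \<Rightarrow> nat) \<Rightarrow> nat \<Rightarrow> bool" where
  "has213 f n \<longleftrightarrow> (\<exists>p q s. 1 \<le> p \<and> p < q \<and> q < s \<and> s \<le> n \<and> f q < f p \<and> f p < f s)"
definition has312 :: "(nat \<Rightarrow> nat) \<Rightarrow> nat \<Rightarrow> bool" where
  "has312 f n \<longleftrightarrow> (\<exists>p q s. 1 \<le> p \<and> p < q \<and> q < s \<and> s \<le> n \<and> f q < f s \<and> f s < f p)"
definition has132 :: "(nat \<Rightarrow> nat) \<Rightarrow> nat \<Rightarrow> bool" where
  "has132 f n \<longleftrightarrow> (\<exists>p q s. 1 \<le> p \<and> p < q \<and> q < s \<and> s \<le> n \<and> f p < f s \<and> f s < f q)"

lemma contains3:
  "contains \<pi> n [x,y,z] \<longleftrightarrow> (\<exists>p q s. 1 \<le> p \<and> p < q \<and> q < s \<and> s \<le> n \<and>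
     (\<pi> p > \<pi> q \<longleftrightarrow> x > y) \<and> (\<pi> p > \<pi> s \<longleftrightarrow> x > z) \<and> (\<pi> q > \<pi> s \<longleftrightarrow> y > z))"
proof
  assume "contains \<pi> n [x,y,z]"
  then obtain idx where h1: "\<forall>s t. s < t \<and> t < length [x,y,z] \<longrightarrow> idx s < idx t"
    and h2: "\<forall>s < length [x,y,z]. 1 \<le> idx s \<and> idx s \<le> n"
    and h3: "\<forall>s t. s < t \<and> t < length [x,y,z] \<longrightarrow> (\<pi> (idx s) > \<pi> (idx t) \<longleftrightarrow> [x,y,z] ! s > [x,y,z] ! t)"
    unfolding contains_def by blast
  show "\<exists>p q s. 1 \<le> p \<and> p < q \<and> q < s \<and> s \<le> n \<and>
     (\<pi> p > \<pi> q \<longleftrightarrow> x > y) \<and> (\<pi> p > \<pi> s \<longleftrightarrow> x > z) \<and> (\<pi> q > \<pi> s \<longleftrightarrow> y > z)"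
    apply (rule exI[of _ "idx 0"], rule exI[of _ "idx 1"], rule exI[of _ "idx 2"])
    using h1[rule_format, of 0 1] h1[rule_format, of 1 2] h2[rule_format, of 0] h2[rule_format, of 2]
      h3[rule_format, of 0 1] h3[rule_format, of 0 2] h3[rule_format, of 1 2]
    by simp
next
  assume "\<exists>p q s. 1 \<le> p \<and> p < q \<and> q < s \<and> s \<le> n \<and>
     (\<pi> p > \<pi> q \<longleftrightarrow> x > y) \<and> (\<pi> p > \<pi> s \<longleftrightarrow> x > z) \<and> (\<pi> q > \<pi> s \<longleftrightarrow> y > z)"
  then obtain p q s where h: "1 \<le> p" "p < q" "q < s" "s \<le> n"
     "(\<pi> p > \<pi> q \<longleftrightarrow> x > y)" "(\<pi> p > \<pi> s \<longleftrightarrow> x > z)" "(\<pi> q > \<pi> s \<longleftrightarrow> y > z)" by blast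
  show "contains \<pi> n [x,y,z]"
    unfolding contains_def
    apply (rule exI[of _ "\<lambda>k. if k = 0 then p else if k = 1 then q else s"])
    using h by (auto simp: less_Suc_eq nth_Cons')
qed

lemma c231: assumes "inj_on f {1..n}" shows "contains f n [2,3,1] \<longleftrightarrow> has231 f n"
  unfolding contains3 has231_def
proof (intro iffI; elim exE; intro exI)
  fix p q s assume h: "1 \<le> p \<and> p < q \<and> q < s \<and> s \<le> n \<and> (f q < f p) = ((3::nat) < 2) \<and> (f s < f p) = ((1::nat) < 2) \<and> (f s < f q) = ((1::nat) < 3)"
  have "f p \<noteq> f q" using inj_onD[OF assms, of p q] h by auto
  then show "1 \<le> p \<and> p < q \<and> q < s \<and> s \<le> n \<and> f s < f p \<and> f p < f q" using h by auto
qed auto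

lemma c213: assumes "inj_on f {1..n}" shows "contains f n [2,1,3] \<longleftrightarrow> has213 f n"
  unfolding contains3 has213_def
proof (intro iffI; elim exE; intro exI)
  fix p q s assume h: "1 \<le> p \<and> p < q \<and> q < s \<and> s \<le> n \<and> (f q < f p) = ((1::nat) < 2) \<and> (f s < f p) = ((3::nat) < 2) \<and> (f s < f q) = ((3::nat) < 1)"
  have "f p \<noteq> f s" using inj_onD[OF assms, of p s] h by auto
  then show "1 \<le> p \<and> p < q \<and> q < s \<and> s \<le> n \<and> f q < f p \<and> f p < f s" using h by auto
qed auto

lemma c312: assumes "inj_on f {1..n}" shows "contains f n [3,1,2] \<longleftrightarrow> has312 f n"
  unfolding contains3 has312_def
proof (intro iffI; elim exE; intro exI)
  fix p q s assume h: "1 \<le> p \<and> p < q \<and> q < s \<and> s \<le> n \<and> (f q < f p) = ((1::nat) < 3) \<and> (f s < f p) = ((2::nat) < 3) \<and> (f s < f q) = ((2::nat) < 1)"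
  have "f q \<noteq> f s" using inj_onD[OF assms, of q s] h by auto
  then show "1 \<le> p \<and> p < q \<and> q < s \<and> s \<le> n \<and> f q < f s \<and> f s < f p" using h by auto
qed auto

lemma c132: assumes "inj_on f {1..n}" shows "contains f n [1,3,2] \<longleftrightarrow> has132 f n"
  unfolding contains3 has132_def
proof (intro iffI; elim exE; intro exI)
  fix p q s assume h: "1 \<le> p \<and> p < q \<and> q < s \<and> s \<le> n \<and> (f q < f p) = ((3::nat) < 1) \<and> (f s < f p) = ((2::nat) < 1) \<and> (f s < f q) = ((2::nat) < 3)"
  have "f p \<noteq> f s" using inj_onD[OF assms, of p s] h by auto
  then show "1 \<le> p \<and> p < q \<and> q < s \<and> s \<le> n \<and> f p < f s \<and> f s < f q" using h by auto
qed auto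

definition w :: "nat \<Rightarrow> nat \<Rightarrow> nat" where
  "w n i = (if 1 \<le> i \<and> i \<le> n then n + 1 - i else i)"

lemma ww: "w n \<circ> w n = id"
  by (auto simp: w_def fun_eq_iff)

lemma ww2[simp]: "w n (w n x) = x"
  using ww by (metis comp_apply id_apply)

lemma w_permutes: "w n permutes {1..n}"
  by (rule inj_imp_permutes) (auto simp: w_def inj_on_def)

definition cj :: "nat \<Rightarrow> (nat \<Rightarrow> nat) \<Rightarrow> nat \<Rightarrow> nat" where
  "cj n f = w n \<circ> f \<circ> w n"

lemma cj_cj: "cj n (cj n f) = f"
  by (auto simp: cj_def fun_eq_iff)

lemma cj_sq: "cj n f \<circ> cj n f = cj n (f \<circ> f)"
  by (auto simp: cj_def fun_eq_iff)

lemma cj_permutes: "f permutes {1..n} \<Longrightarrow> cj n f permutes {1..n}"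
  unfolding cj_def by (intro permutes_compose w_permutes)

lemma cj_val: assumes "1 \<le> p" "p \<le> n" "\<forall>x\<in>{1..n}. f x \<in> {1..n}" shows "cj n f p = n + 1 - f (n + 1 - p)"
proof -
  have a: "n+1-p \<in> {1..n}" using assms(1,2) by auto
  have "f (n+1-p) \<in> {1..n}" using assms(3) a by blast
  then show ?thesis using assms(1,2) by (auto simp: cj_def w_def)
qed

lemma has312_cj:
  assumes R: "\<forall>x\<in>{1..n}. f x \<in> {1..n}"
  shows "has312 (cj n f) n \<longleftrightarrow> has231 f n"
proof
  assume "has312 (cj n f) n"
  then obtain p q s where h: "1 \<le> p" "p < q" "q < s" "s \<le> n" "cj n f q < cj n f s" "cj n f s < cj n f p"
    unfolding has312_def by blast
  define a b d where "a = n+1-s" and "b = n+1-q" and "d = n+1-p"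
  have e: "p = n+1-d" "q = n+1-b" "s = n+1-a" "1 \<le> a" "a < b" "b < d" "d \<le> n" using h by (auto simp: a_def b_def d_def)
  have v: "f a \<in> {1..n}" "f b \<in> {1..n}" "f d \<in> {1..n}" using e R by auto
  have "1 \<le> p" "p \<le> n" "1 \<le> q" "q \<le> n" "1 \<le> s" "s \<le> n" using h by auto
  moreover have ee: "n+1-p = d" "n+1-q = b" "n+1-s = a" using e h by auto
  ultimately have "cj n f p = n+1 - f d" "cj n f q = n+1 - f b" "cj n f s = n+1 - f a"
    using cj_val[OF _ _ R, of p] cj_val[OF _ _ R, of q] cj_val[OF _ _ R, of s] ee by simp_all
  then have "f d < f a" "f a < f b" using h(5,6) v by auto
  then show "has231 f n" unfolding has231_def using e by blast
next
  assume "has231 f n"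
  then obtain a b d where h: "1 \<le> a" "a < b" "b < d" "d \<le> n" "f d < f a" "f a < f b"
    unfolding has231_def by blast
  define p q s where "p = n+1-d" and "q = n+1-b" and "s = n+1-a"
  have e: "d = n+1-p" "b = n+1-q" "a = n+1-s" "1 \<le> p" "p < q" "q < s" "s \<le> n" using h by (auto simp: p_def q_def s_def)
  have v: "f a \<in> {1..n}" "f b \<in> {1..n}" "f d \<in> {1..n}" using h R by auto
  have "1 \<le> p" "p \<le> n" "1 \<le> q" "q \<le> n" "1 \<le> s" "s \<le> n" using e by auto
  moreover have ee: "n+1-p = d" "n+1-q = b" "n+1-s = a" using e h by auto
  ultimately have "cj n f p = n+1 - f d" "cj n f q = n+1 - f b" "cj n f s = n+1 - f a"
    using cj_val[OF _ _ R, of p] cj_val[OF _ _ R, of q] cj_val[OF _ _ R, of s] ee by simp_all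
  then have "cj n f q < cj n f s" "cj n f s < cj n f p" using h v by auto
  then show "has312 (cj n f) n" unfolding has312_def using e by blast
qed

lemma has132_cj:
  assumes R: "\<forall>x\<in>{1..n}. f x \<in> {1..n}"
  shows "has132 (cj n f) n \<longleftrightarrow> has213 f n"
proof
  assume "has132 (cj n f) n"
  then obtain p q s where h: "1 \<le> p" "p < q" "q < s" "s \<le> n" "cj n f p < cj n f s" "cj n f s < cj n f q"
    unfolding has132_def by blast
  define a b d where "a = n+1-s" and "b = n+1-q" and "d = n+1-p"
  have e: "p = n+1-d" "q = n+1-b" "s = n+1-a" "1 \<le> a" "a < b" "b < d" "d \<le> n" using h by (auto simp: a_def b_def d_def)
  have v: "f a \<in> {1..n}" "f b \<in> {1..n}" "f d \<in> {1..n}" using e R by auto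
  have "1 \<le> p" "p \<le> n" "1 \<le> q" "q \<le> n" "1 \<le> s" "s \<le> n" using h by auto
  moreover have ee: "n+1-p = d" "n+1-q = b" "n+1-s = a" using e h by auto
  ultimately have "cj n f p = n+1 - f d" "cj n f q = n+1 - f b" "cj n f s = n+1 - f a"
    using cj_val[OF _ _ R, of p] cj_val[OF _ _ R, of q] cj_val[OF _ _ R, of s] ee by simp_all
  then have "f b < f a" "f a < f d" using h(5,6) v by auto
  then show "has213 f n" unfolding has213_def using e by blast
next
  assume "has213 f n"
  then obtain a b d where h: "1 \<le> a" "a < b" "b < d" "d \<le> n" "f b < f a" "f a < f d"
    unfolding has213_def by blast
  define p q s where "p = n+1-d" and "q = n+1-b" and "s = n+1-a"
  have e: "d = n+1-p" "b = n+1-q" "a = n+1-s" "1 \<le> p" "p < q" "q < s" "s \<le> n" using h by (auto simp: p_def q_def s_def)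
  have v: "f a \<in> {1..n}" "f b \<in> {1..n}" "f d \<in> {1..n}" using h R by auto
  have "1 \<le> p" "p \<le> n" "1 \<le> q" "q \<le> n" "1 \<le> s" "s \<le> n" using e by auto
  moreover have ee: "n+1-p = d" "n+1-q = b" "n+1-s = a" using e h by auto
  ultimately have "cj n f p = n+1 - f d" "cj n f q = n+1 - f b" "cj n f s = n+1 - f a"
    using cj_val[OF _ _ R, of p] cj_val[OF _ _ R, of q] cj_val[OF _ _ R, of s] ee by simp_all
  then have "cj n f p < cj n f s" "cj n f s < cj n f q" using h v by auto
  then show "has132 (cj n f) n" unfolding has132_def using e by blast
qed

definition P :: "nat \<Rightarrow> (nat \<Rightarrow> nat) set" where
  "P n = {\<pi>. \<pi> permutes {1..n} \<and> \<not> has231 \<pi> n \<and> \<not> has213 \<pi> n \<and> \<not> has231 (\<pi> \<circ> \<pi>) n}"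

lemma perm_inj_on: "f permutes S \<Longrightarrow> inj_on f A"
  by (rule permutes_inj_on)

lemma perm_range: "f permutes {1..n} \<Longrightarrow> \<forall>x\<in>{1..n}. f x \<in> {1..n}"
  using permutes_in_image[of f "{1..n}"] by simp

lemma cP: "c n [2,3,1] [2,1,3] [2,3,1] = card (P n)"
proof -
  have "{\<pi>. \<pi> permutes {1..n} \<and> avoids \<pi> n [2,3,1] \<and> avoids \<pi> n [2,1,3] \<and> avoids (\<pi> \<circ> \<pi>) n [2,3,1]} = P n"
    unfolding P_def avoids_def
    using c231[OF perm_inj_on] c213[OF perm_inj_on] c231[OF perm_inj_on[OF permutes_compose]]
    by blast
  then show ?thesis unfolding c_def by simp
qed

lemma cP2: "c n [3,1,2] [1,3,2] [3,1,2] = card (P n)"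
proof -
  have "{\<pi>. \<pi> permutes {1..n} \<and> avoids \<pi> n [3,1,2] \<and> avoids \<pi> n [1,3,2] \<and> avoids (\<pi> \<circ> \<pi>) n [3,1,2]} = cj n ` P n"
  proof (rule set_eqI, rule iffI)
    fix \<sigma> assume "\<sigma> \<in> {\<pi>. \<pi> permutes {1..n} \<and> avoids \<pi> n [3,1,2] \<and> avoids \<pi> n [1,3,2] \<and> avoids (\<pi> \<circ> \<pi>) n [3,1,2]}"
    then have h: "\<sigma> permutes {1..n}" "\<not> has312 \<sigma> n" "\<not> has132 \<sigma> n" "\<not> has312 (\<sigma> \<circ> \<sigma>) n"
      unfolding avoids_def
      using c312[OF perm_inj_on] c132[OF perm_inj_on] c312[OF perm_inj_on[OF permutes_compose]]
      by blast+
    let ?p = "cj n \<sigma>"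
    have pp: "?p permutes {1..n}" using cj_permutes h(1) .
    have r2: "\<forall>x\<in>{1..n}. cj n (\<sigma>\<circ>\<sigma>) x \<in> {1..n}"
      using perm_range[OF cj_permutes[OF permutes_compose[OF h(1) h(1)]]] .
    have a1: "has231 (?p\<circ>?p) n \<longleftrightarrow> has312 (\<sigma>\<circ>\<sigma>) n"
      using has312_cj[OF r2] by (simp add: cj_cj cj_sq)
    have a2: "has231 ?p n \<longleftrightarrow> has312 \<sigma> n"
      using has312_cj[OF perm_range[OF pp]] by (simp add: cj_cj)
    have a3: "has213 ?p n \<longleftrightarrow> has132 \<sigma> n"
      using has132_cj[OF perm_range[OF pp]] by (simp add: cj_cj)
    have "?p \<in> P n" unfolding P_def using pp a1 a2 a3 h by simp
    then show "\<sigma> \<in> cj n ` P n" using cj_cj by (metis image_eqI)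
  next
    fix \<sigma> assume "\<sigma> \<in> cj n ` P n"
    then obtain \<pi> where "\<pi> \<in> P n" and s: "\<sigma> = cj n \<pi>" by blast
    then have h: "\<pi> permutes {1..n}" "\<not> has231 \<pi> n" "\<not> has213 \<pi> n" "\<not> has231 (\<pi> \<circ> \<pi>) n"
      unfolding P_def by auto
    have sp: "\<sigma> permutes {1..n}" using s cj_permutes h(1) by simp
    have b1: "has312 (\<sigma> \<circ> \<sigma>) n \<longleftrightarrow> has231 (\<pi>\<circ>\<pi>) n"
      unfolding s cj_sq by (rule has312_cj[OF perm_range[OF permutes_compose[OF h(1) h(1)]]])
    have b2: "has312 \<sigma> n \<longleftrightarrow> has231 \<pi> n"
      unfolding s by (rule has312_cj[OF perm_range[OF h(1)]])
    have b3: "has132 \<sigma> n \<longleftrightarrow> has213 \<pi> n"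
      unfolding s by (rule has132_cj[OF perm_range[OF h(1)]])
    have "\<not> has312 \<sigma> n" "\<not> has132 \<sigma> n" "\<not> has312 (\<sigma> \<circ> \<sigma>) n"
      using h b1 b2 b3 by auto
    then show "\<sigma> \<in> {\<pi>. \<pi> permutes {1..n} \<and> avoids \<pi> n [3,1,2] \<and> avoids \<pi> n [1,3,2] \<and> avoids (\<pi> \<circ> \<pi>) n [3,1,2]}"
      unfolding avoids_def
      using sp c312[OF perm_inj_on] c132[OF perm_inj_on] c312[OF perm_inj_on[OF permutes_compose]]
      by blast
  qed
  moreover have "inj_on (cj n) (P n)" by (metis cj_cj inj_onI)
  ultimately show ?thesis unfolding c_def by (simp add: card_image)
qed

lemma pinj: "f permutes S \<Longrightarrow> f x = f y \<Longrightarrow> x = y"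
  using permutes_inj injD by metis

lemma prange: "f permutes {1..n} \<Longrightarrow> 1 \<le> x \<Longrightarrow> x \<le> n \<Longrightarrow> 1 \<le> f x \<and> f x \<le> n"
  using permutes_in_image[of f "{1..n}" x] by simp

lemma pout: "f permutes {1..n} \<Longrightarrow> \<not> (1 \<le> x \<and> x \<le> n) \<Longrightarrow> f x = x"
  using permutes_not_in[of f "{1..n}" x] by simp

lemma ppre: assumes "f permutes {1..n}" "1 \<le> v" "v \<le> n" shows "\<exists>x. 1 \<le> x \<and> x \<le> n \<and> f x = v"
proof -
  have "v \<in> f ` {1..n}" using permutes_image[OF assms(1)] assms(2,3) by simp
  then show ?thesis by auto
qed

lemma nomid:
  assumes "\<not> has231 f n" "\<not> has213 f n" "1 \<le> p" "p < q" "p < s" "q \<le> n" "s \<le> n"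
    "f q < f p" "f p < f s"
  shows False
proof (cases "q < s")
  case True
  then have "has213 f n" unfolding has213_def using assms by blast
  then show False using assms by blast
next
  case False
  have "s \<noteq> q" using assms(8,9) by auto
  then have "s < q" using False by linarith
  then have "has231 f n" unfolding has231_def using assms by blast
  then show False using assms by blast
qed

lemma first_val:
  assumes "\<pi> \<in> P n" "1 \<le> n"
  shows "\<pi> 1 = 1 \<or> \<pi> 1 = n"
proof (rule ccontr)
  assume a: "\<not> (\<pi> 1 = 1 \<or> \<pi> 1 = n)"
  have pp: "\<pi> permutes {1..n}" and N: "\<not> has231 \<pi> n" "\<not> has213 \<pi> n" using assms unfolding P_def by auto
  have r1: "1 \<le> \<pi> 1 \<and> \<pi> 1 \<le> n" using prange[OF pp, of 1] assms by simp
  obtain y where y: "1 \<le> y" "y \<le> n" "\<pi> y = 1" using ppre[OF pp, of 1] assms by auto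
  obtain x where x: "1 \<le> x" "x \<le> n" "\<pi> x = n" using ppre[OF pp, of n] assms by auto
  have "y \<noteq> 1" "x \<noteq> 1" using a x y by auto
  then have "1 < y" "1 < x" using x y by auto
  moreover have "\<pi> y < \<pi> 1" "\<pi> 1 < \<pi> x" using a r1 x y by auto
  ultimately show False using nomid[OF N, of 1 y x] x y by simp
qed

lemma shift231:
  assumes "f 1 = 1" "\<forall>i. 1 \<le> i \<and> i \<le> m \<longrightarrow> f (Suc i) = Suc (h i)"
  shows "has231 f (Suc m) \<longleftrightarrow> has231 h m"
proof
  assume "has231 f (Suc m)"
  then obtain p q s where h: "1 \<le> p" "p < q" "q < s" "s \<le> Suc m" "f s < f p" "f p < f q"
    unfolding has231_def by blast
  have "p \<noteq> 1"
  proof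
    assume "p = 1"
    obtain s' where sv: "s = Suc s'" using h by (cases s) auto
    then have "1 \<le> s'" "s' \<le> m" using h \<open>p = 1\<close> by auto
    then have "f s = Suc (h s')" using assms(2)[rule_format, of s'] sv by simp
    then show False using h \<open>p = 1\<close> assms(1) by simp
  qed
  obtain p' where p': "p = Suc p'" using h by (cases p) auto
  obtain q' where q': "q = Suc q'" using h by (cases q) auto
  obtain s' where s': "s = Suc s'" using h by (cases s) auto
  have ps: "p = Suc p'" "q = Suc q'" "s = Suc s'" "1 \<le> p'" "p' < q'" "q' < s'" "s' \<le> m"
    using h p' q' s' \<open>p \<noteq> 1\<close> by auto
  then have e: "f p = Suc (h p')" "f q = Suc (h q')" "f s = Suc (h s')"
    using assms(2)[rule_format, of p'] assms(2)[rule_format, of q'] assms(2)[rule_format, of s'] by auto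
  show "has231 h m" unfolding has231_def
    apply (rule exI[of _ "p'"], rule exI[of _ "q'"], rule exI[of _ "s'"])
    using h e ps by auto
next
  assume "has231 h m"
  then obtain p q s where h: "1 \<le> p" "p < q" "q < s" "s \<le> m" "h s < h p" "h p < h q"
    unfolding has231_def by blast
  have e: "f (Suc p) = Suc (h p)" "f (Suc q) = Suc (h q)" "f (Suc s) = Suc (h s)"
    using assms(2)[rule_format, of p] assms(2)[rule_format, of q] assms(2)[rule_format, of s] h by auto
  show "has231 f (Suc m)" unfolding has231_def
    apply (rule exI[of _ "Suc p"], rule exI[of _ "Suc q"], rule exI[of _ "Suc s"])
    using h e by auto
qed

lemma shift213:
  assumes "f 1 = 1" "\<forall>i. 1 \<le> i \<and> i \<le> m \<longrightarrow> f (Suc i) = Suc (h i)"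
  shows "has213 f (Suc m) \<longleftrightarrow> has213 h m"
proof
  assume "has213 f (Suc m)"
  then obtain p q s where h: "1 \<le> p" "p < q" "q < s" "s \<le> Suc m" "f q < f p" "f p < f s"
    unfolding has213_def by blast
  have "p \<noteq> 1"
  proof
    assume "p = 1"
    obtain q' where sv: "q = Suc q'" using h by (cases q) auto
    then have "1 \<le> q'" "q' \<le> m" using h \<open>p = 1\<close> by auto
    then have "f q = Suc (h q')" using assms(2)[rule_format, of q'] sv by simp
    then show False using h \<open>p = 1\<close> assms(1) by simp
  qed
  obtain p' where p': "p = Suc p'" using h by (cases p) auto
  obtain q' where q': "q = Suc q'" using h by (cases q) auto
  obtain s' where s': "s = Suc s'" using h by (cases s) auto
  have ps: "p = Suc p'" "q = Suc q'" "s = Suc s'" "1 \<le> p'" "p' < q'" "q' < s'" "s' \<le> m"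
    using h p' q' s' \<open>p \<noteq> 1\<close> by auto
  then have e: "f p = Suc (h p')" "f q = Suc (h q')" "f s = Suc (h s')"
    using assms(2)[rule_format, of p'] assms(2)[rule_format, of q'] assms(2)[rule_format, of s'] by auto
  show "has213 h m" unfolding has213_def
    apply (rule exI[of _ "p'"], rule exI[of _ "q'"], rule exI[of _ "s'"])
    using h e ps by auto
next
  assume "has213 h m"
  then obtain p q s where h: "1 \<le> p" "p < q" "q < s" "s \<le> m" "h q < h p" "h p < h s"
    unfolding has213_def by blast
  have e: "f (Suc p) = Suc (h p)" "f (Suc q) = Suc (h q)" "f (Suc s) = Suc (h s)"
    using assms(2)[rule_format, of p] assms(2)[rule_format, of q] assms(2)[rule_format, of s] h by auto
  show "has213 f (Suc m)" unfolding has213_def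
    apply (rule exI[of _ "Suc p"], rule exI[of _ "Suc q"], rule exI[of _ "Suc s"])
    using h e by auto
qed

definition up :: "nat \<Rightarrow> (nat \<Rightarrow> nat) \<Rightarrow> nat \<Rightarrow> nat" where
  "up m \<sigma> i = (if 2 \<le> i \<and> i \<le> Suc m then Suc (\<sigma> (i - 1)) else i)"
definition down :: "nat \<Rightarrow> (nat \<Rightarrow> nat) \<Rightarrow> nat \<Rightarrow> nat" where
  "down m \<pi> i = (if 1 \<le> i \<and> i \<le> m then \<pi> (Suc i) - 1 else i)"

lemma up_val: "2 \<le> i \<Longrightarrow> i \<le> Suc m \<Longrightarrow> up m \<sigma> i = Suc (\<sigma> (i - 1))"
  by (simp add: up_def)

lemma up_rng: assumes "\<sigma> permutes {1..m}" "2 \<le> i" "i \<le> Suc m"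
  shows "2 \<le> up m \<sigma> i \<and> up m \<sigma> i \<le> Suc m"
proof -
  obtain j where j: "i = Suc j" "1 \<le> j" "j \<le> m" using assms(2,3) by (cases i) auto
  have "1 \<le> \<sigma> j \<and> \<sigma> j \<le> m" using prange[OF assms(1) j(2,3)] .
  then show ?thesis using up_val[OF assms(2,3), of \<sigma>] j(1) by simp
qed

lemma up_P:
  assumes "\<sigma> \<in> P m"
  shows "up m \<sigma> \<in> P (Suc m)" "up m \<sigma> 1 = 1"
proof -
  have pp: "\<sigma> permutes {1..m}" and N: "\<not> has231 \<sigma> m" "\<not> has213 \<sigma> m" "\<not> has231 (\<sigma> \<circ> \<sigma>) m"
    using assms unfolding P_def by auto
  let ?f = "up m \<sigma>"
  have f1: "?f 1 = 1" by (simp add: up_def)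
  have fs: "\<forall>i. 1 \<le> i \<and> i \<le> m \<longrightarrow> ?f (Suc i) = Suc (\<sigma> i)" by (simp add: up_def)
  have ffs: "\<forall>i. 1 \<le> i \<and> i \<le> m \<longrightarrow> (?f \<circ> ?f) (Suc i) = Suc ((\<sigma> \<circ> \<sigma>) i)"
  proof (intro allI impI)
    fix i assume i: "1 \<le> i \<and> i \<le> m"
    then have "1 \<le> \<sigma> i \<and> \<sigma> i \<le> m" using prange[OF pp] by blast
    then show "(?f \<circ> ?f) (Suc i) = Suc ((\<sigma> \<circ> \<sigma>) i)" using i by (simp add: up_def)
  qed
  have ff1: "(?f \<circ> ?f) 1 = 1" by (simp add: up_def)
  have fp: "?f permutes {1..Suc m}"
  proof (rule inj_imp_permutes)
    show "inj_on ?f {1..Suc m}"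
    proof (rule inj_onI)
      fix x y assume xy: "x \<in> {1..Suc m}" "y \<in> {1..Suc m}" "?f x = ?f y"
      show "x = y"
      proof (cases "x = 1")
        case True
        show ?thesis
        proof (rule ccontr)
          assume "x \<noteq> y"
          then have "2 \<le> y" "y \<le> Suc m" using True xy(2) by auto
          then have "2 \<le> ?f y" using up_rng[OF pp] by blast
          then show False using xy(3) True f1 by simp
        qed
      next
        case False
        then have x2: "2 \<le> x" "x \<le> Suc m" using xy by auto
        show ?thesis
        proof (cases "y = 1")
          case True
          have "2 \<le> ?f x" using up_rng[OF pp x2] by blast
          then show ?thesis using xy(3) True f1 by simp
        next
          case False
          then have y2: "2 \<le> y" "y \<le> Suc m" using xy by auto
          have "\<sigma> (x-1) = \<sigma> (y-1)" using xy(3) up_val[OF x2, of \<sigma>] up_val[OF y2, of \<sigma>] by simp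
          then have "x - 1 = y - 1" using pinj[OF pp] by blast
          then show ?thesis using x2 y2 by simp
        qed
      qed
    qed
  next
    fix x assume x: "x \<in> {1..Suc m}"
    show "?f x \<in> {1..Suc m}"
    proof (cases "x = 1")
      case True then show ?thesis by (simp add: up_def)
    next
      case False
      then have "2 \<le> x" "x \<le> Suc m" using x by auto
      then show ?thesis using up_rng[OF pp] by fastforce
    qed
  next
    fix x assume "x \<notin> {1..Suc m}"
    then show "?f x = x" by (auto simp: up_def)
  qed simp
  have X1: "has231 ?f (Suc m) = has231 \<sigma> m" by (rule shift231[OF f1 fs])
  have X2: "has213 ?f (Suc m) = has213 \<sigma> m" by (rule shift213[OF f1 fs])
  have X3: "has231 (?f \<circ> ?f) (Suc m) = has231 (\<sigma> \<circ> \<sigma>) m" by (rule shift231[OF ff1 ffs])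
  show "?f \<in> P (Suc m)" unfolding P_def mem_Collect_eq
    using fp N X1 X2 X3 by blast
  show "?f 1 = 1" by (rule f1)
qed

lemma down_P:
  assumes "\<pi> \<in> P (Suc m)" "\<pi> 1 = 1"
  shows "down m \<pi> \<in> P m" "up m (down m \<pi>) = \<pi>"
proof -
  have pp: "\<pi> permutes {1..Suc m}" and N: "\<not> has231 \<pi> (Suc m)" "\<not> has213 \<pi> (Suc m)" "\<not> has231 (\<pi> \<circ> \<pi>) (Suc m)"
    using assms unfolding P_def by auto
  let ?h = "down m \<pi>"
  have rng: "2 \<le> \<pi> (Suc i) \<and> \<pi> (Suc i) \<le> Suc m" if "1 \<le> i" "i \<le> m" for i
  proof -
    have "1 \<le> \<pi> (Suc i) \<and> \<pi> (Suc i) \<le> Suc m" using prange[OF pp, of "Suc i"] that by simp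
    moreover have "\<pi> (Suc i) \<noteq> 1" using pinj[OF pp, of "Suc i" 1] assms(2) that by auto
    ultimately show ?thesis by auto
  qed
  have fs: "\<forall>i. 1 \<le> i \<and> i \<le> m \<longrightarrow> \<pi> (Suc i) = Suc (?h i)"
  proof (intro allI impI)
    fix i assume i: "1 \<le> i \<and> i \<le> m"
    then have "2 \<le> \<pi> (Suc i)" using rng by blast
    then have "\<pi> (Suc i) = Suc (\<pi> (Suc i) - 1)" by arith
    then show "\<pi> (Suc i) = Suc (?h i)" using i by (simp add: down_def)
  qed
  have hr: "1 \<le> ?h i \<and> ?h i \<le> m" if "1 \<le> i" "i \<le> m" for i
    using rng[OF that] that by (auto simp: down_def)
  have ffs: "\<forall>i. 1 \<le> i \<and> i \<le> m \<longrightarrow> (\<pi> \<circ> \<pi>) (Suc i) = Suc ((?h \<circ> ?h) i)"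
  proof (intro allI impI)
    fix i assume i: "1 \<le> i \<and> i \<le> m"
    then show "(\<pi> \<circ> \<pi>) (Suc i) = Suc ((?h \<circ> ?h) i)" using fs hr[of i] by simp
  qed
  have ff1: "(\<pi> \<circ> \<pi>) 1 = 1" using assms(2) by simp
  have hp: "?h permutes {1..m}"
  proof (rule inj_imp_permutes)
    show "inj_on ?h {1..m}"
    proof (rule inj_onI)
      fix x y assume xy: "x \<in> {1..m}" "y \<in> {1..m}" "?h x = ?h y"
      then have "\<pi> (Suc x) = \<pi> (Suc y)" using fs by auto
      then show "x = y" using pinj[OF pp] by blast
    qed
  next
    fix x assume "x \<in> {1..m}" then show "?h x \<in> {1..m}" using hr by auto
  next
    fix x assume "x \<notin> {1..m}" then show "?h x = x" by (auto simp: down_def)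
  qed simp
  have X1: "has231 \<pi> (Suc m) = has231 ?h m" by (rule shift231[OF assms(2) fs])
  have X2: "has213 \<pi> (Suc m) = has213 ?h m" by (rule shift213[OF assms(2) fs])
  have X3: "has231 (\<pi> \<circ> \<pi>) (Suc m) = has231 (?h \<circ> ?h) m" by (rule shift231[OF ff1 ffs])
  show "?h \<in> P m" unfolding P_def mem_Collect_eq
    using hp N X1 X2 X3 by blast
  show "up m ?h = \<pi>"
  proof
    fix i
    show "up m ?h i = \<pi> i"
    proof (cases "2 \<le> i \<and> i \<le> Suc m")
      case True
      then obtain j where j: "i = Suc j" "1 \<le> j" "j \<le> m" by (cases i) auto
      then have "\<pi> i = Suc (?h j)" using fs by simp
      then show ?thesis using True j by (simp add: up_def)
    next
      case False
      then have "i = 1 \<or> \<not> (1 \<le> i \<and> i \<le> Suc m)" by auto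
      then show ?thesis using False assms(2) pout[OF pp, of i] by (auto simp: up_def)
    qed
  qed
qed

lemma down_up: assumes "\<sigma> permutes {1..m}" shows "down m (up m \<sigma>) = \<sigma>"
proof
  fix i
  show "down m (up m \<sigma>) i = \<sigma> i"
  proof (cases "1 \<le> i \<and> i \<le> m")
    case True
    then show ?thesis by (simp add: down_def up_def)
  next
    case False
    then have "down m (up m \<sigma>) i = i" unfolding down_def by auto
    then show ?thesis using pout[OF assms False] by simp
  qed
qed

lemma card_first1: "card {\<pi> \<in> P (Suc m). \<pi> 1 = 1} = card (P m)"
proof -
  have "{\<pi> \<in> P (Suc m). \<pi> 1 = 1} = up m ` P m"
  proof (rule set_eqI, rule iffI)
    fix \<pi> assume a: "\<pi> \<in> {\<pi> \<in> P (Suc m). \<pi> 1 = 1}"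
    then have "down m \<pi> \<in> P m" "up m (down m \<pi>) = \<pi>" using down_P[of \<pi> m] by auto
    then show "\<pi> \<in> up m ` P m" by (metis image_eqI)
  next
    fix \<pi> assume "\<pi> \<in> up m ` P m"
    then obtain \<sigma> where "\<sigma> \<in> P m" "\<pi> = up m \<sigma>" by blast
    then show "\<pi> \<in> {\<pi> \<in> P (Suc m). \<pi> 1 = 1}" using up_P[of \<sigma> m] by simp
  qed
  moreover have "inj_on (up m) (P m)"
  proof (rule inj_onI)
    fix x y assume "x \<in> P m" "y \<in> P m" "up m x = up m y"
    then have "x permutes {1..m}" "y permutes {1..m}" unfolding P_def by auto
    then show "x = y" using down_up \<open>up m x = up m y\<close> by metis
  qed
  ultimately show ?thesis by (simp add: card_image)
qed

definition E :: "nat \<Rightarrow> nat \<Rightarrow> nat \<Rightarrow> nat" where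
  "E b r i = (if 1 \<le> i \<and> i \<le> b then b + r + 1 - i else if b < i \<and> i \<le> b + r then i - b else i)"

lemma E2: assumes "r \<le> b"
  shows "E b r (E b r i) = (if 1 \<le> i \<and> i \<le> r then r + 1 - i else if r < i \<and> i \<le> b then i
     else if b < i \<and> i \<le> b + r then 2 * b + r + 1 - i else i)"
  using assms by (auto simp: E_def)

lemma E_perm: assumes "r \<le> b" shows "E b r permutes {1..b+r}"
proof (rule inj_imp_permutes)
  show "inj_on (E b r) {1..b + r}"
    by (rule inj_onI) (auto simp: E_def split: if_splits)
next
  fix x assume "x \<in> {1..b+r}" then show "E b r x \<in> {1..b+r}" by (auto simp: E_def)
next
  fix x assume "x \<notin> {1..b+r}" then show "E b r x = x" by (auto simp: E_def)
qed simp

lemma E_P: assumes "1 \<le> r" "r \<le> b" shows "E b r \<in> P (b + r)" "E b r 1 = b + r"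
proof -
  show "E b r 1 = b + r" using assms by (simp add: E_def)
  have n1: "\<not> has231 (E b r) (b + r)"
    unfolding has231_def by (auto simp: E_def split: if_splits)
  have n2: "\<not> has213 (E b r) (b + r)"
    unfolding has213_def by (auto simp: E_def split: if_splits)
  have n3: "\<not> has231 (E b r \<circ> E b r) (b + r)"
    unfolding has231_def comp_def E2[OF assms(2)] using assms by (auto split: if_splits)
  show "E b r \<in> P (b + r)" unfolding P_def using E_perm[OF assms(2)] n1 n2 n3 by simp
qed

lemma Q_char:
  assumes "\<pi> \<in> P n" "2 \<le> n" "\<pi> 1 = n"
  shows "\<exists>r. 1 \<le> r \<and> r \<le> n - r \<and> \<pi> = E (n - r) r"
proof -
  have pp: "\<pi> permutes {1..n}" and N: "\<not> has231 \<pi> n" "\<not> has213 \<pi> n"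
    and N2: "\<not> has231 (\<pi> \<circ> \<pi>) n" using assms(1) unfolding P_def by auto
  have rg: "\<And>x. 1 \<le> x \<Longrightarrow> x \<le> n \<Longrightarrow> 1 \<le> \<pi> x \<and> \<pi> x \<le> n" using prange[OF pp] by blast
  have inj: "\<And>x y. \<pi> x = \<pi> y \<Longrightarrow> x = y" using pinj[OF pp] by blast
  have pre: "\<And>v. 1 \<le> v \<Longrightarrow> v \<le> n \<Longrightarrow> \<exists>x. 1 \<le> x \<and> x \<le> n \<and> \<pi> x = v" using ppre[OF pp] by blast
  have nm: "\<And>p q s. 1 \<le> p \<Longrightarrow> p < q \<Longrightarrow> p < s \<Longrightarrow> q \<le> n \<Longrightarrow> s \<le> n \<Longrightarrow> \<pi> q < \<pi> p \<Longrightarrow> \<pi> p < \<pi> s \<Longrightarrow> False"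
    using nomid[OF N] by blast
  have w231: "\<And>p q s. 1 \<le> p \<Longrightarrow> p < q \<Longrightarrow> q < s \<Longrightarrow> s \<le> n \<Longrightarrow> \<pi> (\<pi> s) < \<pi> (\<pi> p) \<Longrightarrow> \<pi> (\<pi> p) < \<pi> (\<pi> q) \<Longrightarrow> False"
    using N2 unfolding has231_def comp_def by blast
  show ?thesis
  proof (cases "\<forall>i. 1 \<le> i \<and> i \<le> n \<longrightarrow> \<pi> i = n + 1 - i")
    case True
    have "\<pi> = E (n-1) 1"
    proof
      fix i show "\<pi> i = E (n-1) 1 i"
      proof (cases "1 \<le> i \<and> i \<le> n")
        case a: True
        then show ?thesis using True assms(2) by (auto simp: E_def)
      next
        case False then show ?thesis using pout[OF pp False] by (auto simp: E_def)
      qed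
    qed
    then show ?thesis using assms(2) by (intro exI[of _ 1]) auto
  next
    case False
    define m where "m = (LEAST i. 1 \<le> i \<and> i \<le> n \<and> \<pi> i \<noteq> n + 1 - i)"
    have ex: "\<exists>i. 1 \<le> i \<and> i \<le> n \<and> \<pi> i \<noteq> n + 1 - i" using False by blast
    have m1: "1 \<le> m \<and> m \<le> n \<and> \<pi> m \<noteq> n + 1 - m" unfolding m_def using LeastI_ex[OF ex] .
    have m2: "\<pi> i = n + 1 - i" if "1 \<le> i" "i < m" for i
    proof (rule ccontr)
      assume "\<pi> i \<noteq> n + 1 - i"
      then have "m \<le> i" unfolding m_def using that m1 by (intro Least_le) auto
      then show False using that by simp
    qed
    have "m \<noteq> 1" using m1 assms(3) by auto
    define b where "b = m - 1"
    define r where "r = n - b"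
    have b1: "1 \<le> b" "b < n" "m = b + 1" "n = b + r" using m1 \<open>m \<noteq> 1\<close> by (auto simp: b_def r_def)
    have head: "\<And>i. 1 \<le> i \<Longrightarrow> i \<le> b \<Longrightarrow> \<pi> i = b + r + 1 - i" using m2 b1 by auto
    have nb: "\<pi> (b+1) \<noteq> r" using m1 b1 by auto
    have tail_le: "1 \<le> \<pi> i \<and> \<pi> i \<le> r" if i: "b < i" "i \<le> n" for i
    proof -
      have r1: "1 \<le> \<pi> i \<and> \<pi> i \<le> n" using rg i b1 by auto
      show "1 \<le> \<pi> i \<and> \<pi> i \<le> r"
      proof (rule ccontr)
        assume "\<not> (1 \<le> \<pi> i \<and> \<pi> i \<le> r)"
        then have "r < \<pi> i" using r1 by auto
        define j where "j = n + 1 - \<pi> i"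
        have j: "1 \<le> j" "j \<le> b" using r1 \<open>r < \<pi> i\<close> b1 by (auto simp: j_def)
        have "\<pi> j = \<pi> i" using head[OF j] r1 b1 by (simp add: j_def)
        then have "j = i" using inj by blast
        then show False using j i by simp
      qed
    qed
    have head_ge: "\<And>i. 1 \<le> i \<Longrightarrow> i \<le> b \<Longrightarrow> r < \<pi> i" using head b1 by auto
    have pre_tail: "\<exists>x. b < x \<and> x \<le> n \<and> \<pi> x = v" if v: "1 \<le> v" "v \<le> r" for v
    proof -
      obtain x where x: "1 \<le> x" "x \<le> n" "\<pi> x = v" using pre[of v] v b1 by auto
      have "\<not> x \<le> b" using head_ge[of x] x v by auto
      then have "b < x" by simp
      then show "\<exists>x. b < x \<and> x \<le> n \<and> \<pi> x = v" using x(2,3) by blast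
    qed
    have r2: "2 \<le> r"
    proof (rule ccontr)
      assume "\<not> 2 \<le> r"
      then have "r = 1" using b1 by auto
      then have "\<pi> (b+1) = 1" using tail_le[of "b+1"] b1 by auto
      then show False using nb \<open>r = 1\<close> by simp
    qed
    have pb1: "\<pi> (b+1) = 1"
    proof (rule ccontr)
      assume a: "\<pi> (b+1) \<noteq> 1"
      have v: "1 < \<pi> (b+1)" "\<pi> (b+1) < r" using tail_le[of "b+1"] b1 a nb by auto
      obtain y where y: "b < y" "y \<le> n" "\<pi> y = 1" using pre_tail[of 1] r2 by auto
      obtain x where x: "b < x" "x \<le> n" "\<pi> x = r" using pre_tail[of r] r2 by auto
      have "y \<noteq> b+1" "x \<noteq> b+1" using y x a nb by auto
      then show False using nm[of "b+1" y x] x y v b1 by auto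
    qed
    have pn1: "\<pi> n \<noteq> 1" using inj[of n "b+1"] pb1 b1 r2 by auto
    have pnr: "1 \<le> \<pi> n \<and> \<pi> n \<le> r" using tail_le[of n] b1 by auto
    show ?thesis
    proof (cases "b < r")
      case True
      obtain z where z: "1 \<le> z" "z \<le> n" "\<pi> z = b + 1" using pre[of "b+1"] b1 by auto
      have "\<not> z \<le> b"
      proof
        assume "z \<le> b"
        then have "b + r + 1 - z = b + 1" using head[of z] z by simp
        then show False using \<open>z \<le> b\<close> True by simp
      qed
      moreover have "z \<noteq> b + 1" using z pb1 b1 by auto
      ultimately have zb: "b + 1 < z" by auto
      have "1 < \<pi> n" "\<pi> n < n" using pn1 pnr b1 by auto
      moreover have "\<pi> (\<pi> z) = 1" "\<pi> (\<pi> 1) = \<pi> n" "\<pi> (\<pi> (b+1)) = n" using z pb1 assms(3) by auto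
      ultimately show ?thesis using w231[of 1 "b+1" z] zb z b1 by auto
    next
      case False
      hence rb: "r \<le> b" by simp
      have pn: "\<pi> n = r"
      proof (rule ccontr)
        assume a: "\<pi> n \<noteq> r"
        obtain x where x: "b < x" "x \<le> n" "\<pi> x = r" using pre_tail[of r] r2 by auto
        have "x \<noteq> b+1" using x pb1 r2 by auto
        have "x \<noteq> n" using x a by auto
        define q where "q = n + 1 - x"
        have q: "1 < q" "q < r" "q \<le> b" using x \<open>x \<noteq> b+1\<close> \<open>x \<noteq> n\<close> b1 rb by (auto simp: q_def)
        have "\<pi> q = x" using head[of q] q x b1 by (auto simp: q_def)
        then have v2: "\<pi> (\<pi> q) = r" using x by simp
        have "\<pi> r = b + 1" using head[of r] rb r2 b1 by auto
        then have v3: "\<pi> (\<pi> r) = 1" using pb1 by simp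
        have "1 < \<pi> n" "\<pi> n < r" using pnr pn1 a by auto
        moreover have "\<pi> (\<pi> 1) = \<pi> n" using assms(3) by simp
        ultimately show False using w231[of 1 q r] q v2 v3 b1 by auto
      qed
      have tl: "\<pi> (b + j) = j" if "1 \<le> j" "j \<le> r" for j
        using that
      proof (induction j rule: less_induct)
        case (less j)
        show ?case
        proof (cases "j = r")
          case True then show ?thesis using pn b1 by simp
        next
          case jr: False
          show ?thesis
          proof (rule ccontr)
            assume a: "\<pi> (b + j) \<noteq> j"
            have v: "1 \<le> \<pi> (b+j) \<and> \<pi> (b+j) \<le> r" using tail_le[of "b+j"] less.prems b1 by auto
            have "\<pi> (b+j) \<noteq> r" using inj[of "b+j" n] pn jr less.prems b1 by auto
            have "\<not> \<pi> (b+j) < j"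
            proof
              assume "\<pi> (b+j) < j"
              then have "\<pi> (b + \<pi> (b+j)) = \<pi> (b+j)" using less.IH[of "\<pi>(b+j)"] v less.prems by auto
              then have "b + \<pi> (b+j) = b + j" using inj by blast
              then show False using \<open>\<pi> (b+j) < j\<close> by simp
            qed
            then have vj: "j < \<pi> (b+j)" "\<pi> (b+j) < r" using a v \<open>\<pi> (b+j) \<noteq> r\<close> by auto
            obtain y where y: "b < y" "y \<le> n" "\<pi> y = j" using pre_tail[of j] less.prems by auto
            have "\<not> y < b + j"
            proof
              assume "y < b + j"
              define k where "k = y - b"
              have k: "1 \<le> k" "k < j" "y = b + k" using y \<open>y < b+j\<close> by (auto simp: k_def)
              then have "\<pi> y = k" using less.IH[of k] less.prems by auto
              then show False using y k by simp
            qed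
            moreover have "y \<noteq> b + j" using y a by auto
            ultimately have "b + j < y" by auto
            moreover have "b + j < n" using jr less.prems b1 by auto
            ultimately show False using nm[of "b+j" y n] y vj pn b1 less.prems by auto
          qed
        qed
      qed
      have "\<pi> = E b r"
      proof
        fix i show "\<pi> i = E b r i"
        proof (cases "1 \<le> i \<and> i \<le> b")
          case True then show ?thesis using head[of i] by (simp add: E_def)
        next
          case nh: False
          show ?thesis
          proof (cases "b < i \<and> i \<le> n")
            case True
            define j where "j = i - b"
            have j: "i = b + j" "1 \<le> j" "j \<le> r" using True b1 by (auto simp: j_def)
            then have "\<pi> i = j" using tl by simp
            moreover have "E b r i = j" using j nh True b1 by (simp add: E_def)
            ultimately show ?thesis by simp
          next
            case False
            then have "\<not> (1 \<le> i \<and> i \<le> n)" using nh by auto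
            then show ?thesis using pout[OF pp] nh False b1 by (auto simp: E_def)
          qed
        qed
      qed
      moreover have "n - r = b" using b1 by simp
      ultimately show ?thesis using rb r2 by (intro exI[of _ r]) auto
    qed
  qed
qed

lemma E_at_n: assumes "1 \<le> r" "r \<le> n - r" shows "E (n - r) r n = r"
proof -
  have h: "\<not> n \<le> n - r" "n - r < n" "n \<le> n - r + r" "n - (n - r) = r" using assms by arith+
  then show ?thesis by (simp add: E_def)
qed

lemma card_Q: assumes "2 \<le> n" shows "card {\<pi> \<in> P n. \<pi> 1 = n} = n div 2"
proof -
  have "{\<pi> \<in> P n. \<pi> 1 = n} = (\<lambda>r. E (n - r) r) ` {1..n div 2}"
  proof (rule set_eqI, rule iffI)
    fix \<pi> assume "\<pi> \<in> {\<pi> \<in> P n. \<pi> 1 = n}"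
    then obtain r where r: "1 \<le> r" "r \<le> n - r" "\<pi> = E (n - r) r" using Q_char[of \<pi> n] assms by auto
    then have "r \<in> {1..n div 2}" by auto
    then show "\<pi> \<in> (\<lambda>r. E (n - r) r) ` {1..n div 2}" using r(3) by blast
  next
    fix \<pi> assume "\<pi> \<in> (\<lambda>r. E (n - r) r) ` {1..n div 2}"
    then obtain r where r: "r \<in> {1..n div 2}" "\<pi> = E (n - r) r" by blast
    then have r1: "1 \<le> r" "r \<le> n - r" by auto
    have e: "n - r + r = n" using r1 by simp
    show "\<pi> \<in> {\<pi> \<in> P n. \<pi> 1 = n}" using E_P[OF r1] r(2) e by simp
  qed
  moreover have "inj_on (\<lambda>r. E (n - r) r) {1..n div 2}"
  proof (rule inj_onI)
    fix x y assume xy: "x \<in> {1..n div 2}" "y \<in> {1..n div 2}" "E (n - x) x = E (n - y) y"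
    have "E (n - x) x n = x" "E (n - y) y n = y" using xy(1,2) by (auto intro!: E_at_n)
    then show "x = y" using xy(3) by metis
  qed
  ultimately show ?thesis by (simp add: card_image)
qed

lemma finP: "finite (P n)"
proof -
  have "P n \<subseteq> {p. p permutes {1..n}}" unfolding P_def by auto
  then show ?thesis using finite_permutations[of "{1..n}"] finite_subset by auto
qed

lemma card_rec: assumes "1 \<le> m" shows "card (P (Suc m)) = card (P m) + Suc m div 2"
proof -
  have "P (Suc m) = {\<pi> \<in> P (Suc m). \<pi> 1 = 1} \<union> {\<pi> \<in> P (Suc m). \<pi> 1 = Suc m}"
    using first_val[of _ "Suc m"] by auto
  moreover have "{\<pi> \<in> P (Suc m). \<pi> 1 = 1} \<inter> {\<pi> \<in> P (Suc m). \<pi> 1 = Suc m} = {}" using assms by auto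
  ultimately have "card (P (Suc m)) = card {\<pi> \<in> P (Suc m). \<pi> 1 = 1} + card {\<pi> \<in> P (Suc m). \<pi> 1 = Suc m}"
    using finP[of "Suc m"] by (metis (no_types, lifting) card_Un_disjoint finite_Un)
  then show ?thesis using card_first1[of m] card_Q[of "Suc m"] assms by simp
qed

lemma P1: "card (P 1) = 1"
proof -
  have "P 1 = {id}"
  proof
    show "P 1 \<subseteq> {id}" unfolding P_def by auto
    have "\<not> has231 id 1" "\<not> has213 id 1" "\<not> has231 (id \<circ> id) 1" unfolding has231_def has213_def by auto
    then show "{id} \<subseteq> P 1" unfolding P_def by auto
  qed
  then show ?thesis by simp
qed

lemma cardP: assumes "1 \<le> n"
  shows "card (P n) = (if even n then (n div 2)^2 + 1 else (n div 2)^2 + n div 2 + 1)"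
  using assms
proof (induction n rule: nat_induct_at_least)
  case base
  then show ?case using P1 by simp
next
  case (Suc m)
  have IH: "card (P m) = (if even m then (m div 2)^2 + 1 else (m div 2)^2 + m div 2 + 1)" by (rule Suc.IH)
  show ?case
  proof (cases "even m")
    case True
    then obtain k where k: "m = 2 * k" by blast
    have "Suc m div 2 = k" "odd (Suc m)" using k by auto
    then show ?thesis using card_rec[OF Suc.hyps] IH True k by simp
  next
    case False
    then obtain k where k: "m = 2 * k + 1" using oddE by blast
    have "Suc m div 2 = k + 1" "even (Suc m)" "m div 2 = k" using k by auto
    then show ?thesis using card_rec[OF Suc.hyps] IH False k by (simp add: power2_eq_square)
  qed
qed

theorem theorem3p5:
  fixes n :: nat
  assumes "n \<ge> 1"
  shows "c n [2,3,1] [2,1,3] [2,3,1] = c n [3,1,2] [1,3,2] [3,1,2] \<and>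
         c n [2,3,1] [2,1,3] [2,3,1] =
           (if even n then (n div 2)^2 + 1 else (n div 2)^2 + n div 2 + 1)"
  using cP cP2 cardP[OF assms] by simp

end
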